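(* Let $p$ be a binary-coded probability distribution and fix an integer $n\ge1$. Run the algorithm GenOpt described below on $p$. Let $B_n$ denote the first $n$ bits appended to $b$, and $C_n$ the number of random bits drawn up to and including the point when the $n$-th bit is appended. Then for all $s\in\{0,1\}^n$ and $\ell\ge0$, $\Pr(B_n=s,\,C_n=\ell)=2^{-\ell}\,\mathbf{1}\big[[p(s)]_\ell=1\big]$.
   Context: A binary-coded probability distribution is a map $p:\{0,1\}^*\to[0,1]$ with $p(\varepsilon)=1$ ($\varepsilon$ the empty string) and $p(b)=p(b0)+p(b1)$ for every finite binary string $b$. Every real $z\in[0,1]$ has a unique concise binary expansion $z=(z_0.z_1z_2\ldots)_2=\sum_{i\ge0}z_i2^{-i}$ not ending in an infinite string of 1s; write $[z]_i:=z_i$. Algorithm GenOpt: it maintains a string $b$ (initially empty) and a counter $\ell$ (initially $0$) of fair random bits drawn, and repeats forever the following round, which appends one bit to $b$: if $[p(b0)]_\ell=1$ and $[p(b1)]_\ell=0$, append $0$; else if $[p(b0)]_\ell=0$ and $[p(b1)]_\ell=1$, append $1$; otherwise repeat: draw a fair random bit $x$ and set $\ell\leftarrow\ell+1$; if $x=0$ and $[p(b0)]_\ell=1$, append $0$ and end the round; if $x=1$ and $[p(b1)]_\ell=1$, append $1$ and end the round. *)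

theory Defs
  imports "HOL-Probability.Probability"
begin

text \<open>Binary strings are bool lists; False encodes bit 0, True encodes bit 1.\<close>

definition binary_coded_distribution :: "(bool list \<Rightarrow> real) \<Rightarrow> bool" where
  "binary_coded_distribution p \<longleftrightarrow>
     (\<forall>b. 0 \<le> p b \<and> p b \<le> 1) \<and> p [] = 1 \<and>
     (\<forall>b. p b = p (b @ [False]) + p (b @ [True]))"

text \<open>i-th digit of the concise binary expansion z = z0.z1z2..., z in [0,1]
  (expansion not ending in infinitely many 1s); True means digit 1.\<close>
definition bdigit :: "real \<Rightarrow> nat \<Rightarrow> bool" where
  "bdigit z i \<longleftrightarrow> \<lfloor>z * 2 ^ i\<rfloor> mod 2 = 1"

text \<open>Inner loop of a round of GenOpt. x is the sequence of fair random bits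
  (x k is the (k+1)-th bit drawn). genopt_inner p x b l l' c: starting the inner loop
  with string b and counter l, the loop ends with counter l' after appending bit c.\<close>
inductive genopt_inner :: "(bool list \<Rightarrow> real) \<Rightarrow> (nat \<Rightarrow> bool) \<Rightarrow> bool list \<Rightarrow> nat \<Rightarrow> nat \<Rightarrow> bool \<Rightarrow> bool"
  for p x where
  stop0: "\<not> x l \<Longrightarrow> bdigit (p (b @ [False])) (Suc l) \<Longrightarrow> genopt_inner p x b l (Suc l) False"
| stop1: "x l \<Longrightarrow> bdigit (p (b @ [True])) (Suc l) \<Longrightarrow> genopt_inner p x b l (Suc l) True"
| cont: "\<not> (\<not> x l \<and> bdigit (p (b @ [False])) (Suc l)) \<Longrightarrow>
         \<not> (x l \<and> bdigit (p (b @ [True])) (Suc l)) \<Longrightarrow>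
         genopt_inner p x b (Suc l) l' c \<Longrightarrow> genopt_inner p x b l l' c"

text \<open>genopt_run p x n b l: after n rounds of GenOpt driven by the random bits x,
  the string is b and the counter of drawn random bits is l.\<close>
inductive genopt_run :: "(bool list \<Rightarrow> real) \<Rightarrow> (nat \<Rightarrow> bool) \<Rightarrow> nat \<Rightarrow> bool list \<Rightarrow> nat \<Rightarrow> bool"
  for p x where
  init: "genopt_run p x 0 [] 0"
| app0: "genopt_run p x n b l \<Longrightarrow> bdigit (p (b @ [False])) l \<Longrightarrow> \<not> bdigit (p (b @ [True])) l \<Longrightarrow>
         genopt_run p x (Suc n) (b @ [False]) l"
| app1: "genopt_run p x n b l \<Longrightarrow> \<not> bdigit (p (b @ [False])) l \<Longrightarrow> bdigit (p (b @ [True])) l \<Longrightarrow>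
         genopt_run p x (Suc n) (b @ [True]) l"
| draw: "genopt_run p x n b l \<Longrightarrow>
         \<not> (bdigit (p (b @ [False])) l \<and> \<not> bdigit (p (b @ [True])) l) \<Longrightarrow>
         \<not> (\<not> bdigit (p (b @ [False])) l \<and> bdigit (p (b @ [True])) l) \<Longrightarrow>
         genopt_inner p x b l l' c \<Longrightarrow> genopt_run p x (Suc n) (b @ [c]) l'"

definition coins :: "(nat \<Rightarrow> bool) measure" where
  "coins = (\<Pi>\<^sub>M i\<in>(UNIV::nat set). measure_pmf (bernoulli_pmf (1/2)))"

end

theory Submission
  imports Defs
begin


definition cnt :: "(bool list \<Rightarrow> real) \<Rightarrow> (nat \<Rightarrow> bool) \<Rightarrow> bool list \<Rightarrow> nat \<Rightarrow> bool" where
  "cnt p x b j \<longleftrightarrow> \<not> (\<not> x j \<and> bdigit (p (b @ [False])) (Suc j)) \<and> \<not> (x j \<and> bdigit (p (b @ [True])) (Suc j))"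

definition inprog :: "(bool list \<Rightarrow> real) \<Rightarrow> (nat \<Rightarrow> bool) \<Rightarrow> bool list \<Rightarrow> nat \<Rightarrow> bool" where
  "inprog p x b k \<longleftrightarrow> (\<exists>l\<le>k. genopt_run p x (length b) b l \<and>
     (bdigit (p (b @ [False])) l = bdigit (p (b @ [True])) l) \<and> (\<forall>i. l \<le> i \<and> i < k \<longrightarrow> cnt p x b i))"

lemma inner_imp:
  assumes "genopt_inner p x b l l' c"
  shows "\<exists>j. l \<le> j \<and> l' = Suc j \<and> (\<forall>i. l \<le> i \<and> i < j \<longrightarrow> cnt p x b i) \<and> x j = c \<and> bdigit (p (b @ [c])) (Suc j)"
  using assms
proof (induction rule: genopt_inner.induct)
  case (stop0 l b)
  then show ?case by auto
next
  case (stop1 l b)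
  then show ?case by auto
next
  case (cont l b l' c)
  then obtain j where j: "Suc l \<le> j" "l' = Suc j" "\<forall>i. Suc l \<le> i \<and> i < j \<longrightarrow> cnt p x b i" "x j = c"
    "bdigit (p (b @ [c])) (Suc j)" by blast
  have "\<forall>i. l \<le> i \<and> i < j \<longrightarrow> cnt p x b i"
  proof (intro allI impI)
    fix i assume "l \<le> i \<and> i < j"
    then show "cnt p x b i"
      using j(3) cont.hyps(1,2) by (cases "i = l") (auto simp: cnt_def)
  qed
  then show ?case using j by (intro exI[of _ j]) auto
qed

lemma inner_intro:
  assumes "\<forall>i. l \<le> i \<and> i < l + d \<longrightarrow> cnt p x b i" "x (l + d) = c" "bdigit (p (b @ [c])) (Suc (l + d))"
  shows "genopt_inner p x b l (Suc (l + d)) c"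
  using assms
proof (induction d arbitrary: l)
  case 0
  then show ?case
    by (cases c) (auto intro: genopt_inner.stop0 genopt_inner.stop1)
next
  case (Suc d)
  have "genopt_inner p x b (Suc l) (Suc (Suc l + d)) c"
    using Suc.prems by (intro Suc.IH) auto
  moreover have "cnt p x b l" using Suc.prems(1) by auto
  ultimately show ?case
    by (auto intro: genopt_inner.cont simp: cnt_def)
qed

lemma inner_iff:
  "genopt_inner p x b l l' c \<longleftrightarrow>
   (\<exists>j. l \<le> j \<and> l' = Suc j \<and> (\<forall>i. l \<le> i \<and> i < j \<longrightarrow> cnt p x b i) \<and> x j = c \<and> bdigit (p (b @ [c])) (Suc j))"
  (is "?L = ?R")
proof
  assume "?L" then show "?R" by (rule inner_imp)
next
  assume "\<exists>j. l \<le> j \<and> l' = Suc j \<and> (\<forall>i. l \<le> i \<and> i < j \<longrightarrow> cnt p x b i) \<and> x j = c \<and> bdigit (p (b @ [c])) (Suc j)"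
  then obtain j where j: "l \<le> j" "l' = Suc j" "\<forall>i. l \<le> i \<and> i < j \<longrightarrow> cnt p x b i" "x j = c" "bdigit (p (b @ [c])) (Suc j)"
    by blast
  obtain d where d: "j = l + d" using j(1) le_Suc_ex by blast
  show "genopt_inner p x b l l' c" using inner_intro[of l d p x b c] j d by auto
qed

lemma run_length: "genopt_run p x n b l \<Longrightarrow> length b = n"
  by (induction rule: genopt_run.induct) auto

lemma run_0: "genopt_run p x 0 b l \<longleftrightarrow> b = [] \<and> l = 0"
  by (auto elim: genopt_run.cases intro: genopt_run.init)

lemma run_Suc:
  "genopt_run p x (Suc (length b)) (b @ [c]) m \<longleftrightarrow>
    (genopt_run p x (length b) b m \<and> bdigit (p (b @ [c])) m \<and> \<not> bdigit (p (b @ [\<not> c])) m) \<or>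
    (\<exists>j. m = Suc j \<and> inprog p x b j \<and> x j = c \<and> bdigit (p (b @ [c])) (Suc j))"
proof
  assume "genopt_run p x (Suc (length b)) (b @ [c]) m"
  then show "(genopt_run p x (length b) b m \<and> bdigit (p (b @ [c])) m \<and> \<not> bdigit (p (b @ [\<not> c])) m) \<or>
    (\<exists>j. m = Suc j \<and> inprog p x b j \<and> x j = c \<and> bdigit (p (b @ [c])) (Suc j))"
  proof (cases rule: genopt_run.cases)
    case app0
    then show ?thesis by auto
  next
    case app1
    then show ?thesis by auto
  next
    case (draw b' l c')
    then have bb: "b' = b" "c' = c" by auto
    from draw(5) obtain j where j: "l \<le> j" "m = Suc j" "\<forall>i. l \<le> i \<and> i < j \<longrightarrow> cnt p x b i" "x j = c"
      "bdigit (p (b @ [c])) (Suc j)" unfolding inner_iff bb by blast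
    have "inprog p x b j" unfolding inprog_def using draw bb j by (intro exI[of _ l]) auto
    then show ?thesis using j by auto
  qed
next
  assume "(genopt_run p x (length b) b m \<and> bdigit (p (b @ [c])) m \<and> \<not> bdigit (p (b @ [\<not> c])) m) \<or>
    (\<exists>j. m = Suc j \<and> inprog p x b j \<and> x j = c \<and> bdigit (p (b @ [c])) (Suc j))"
  then show "genopt_run p x (Suc (length b)) (b @ [c]) m"
  proof
    assume "genopt_run p x (length b) b m \<and> bdigit (p (b @ [c])) m \<and> \<not> bdigit (p (b @ [\<not> c])) m"
    then show ?thesis by (cases c) (auto intro: genopt_run.app0 genopt_run.app1)
  next
    assume "\<exists>j. m = Suc j \<and> inprog p x b j \<and> x j = c \<and> bdigit (p (b @ [c])) (Suc j)"
    then obtain j l where j: "m = Suc j" "x j = c" "bdigit (p (b @ [c])) (Suc j)" "l \<le> j"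
      "genopt_run p x (length b) b l" "bdigit (p (b @ [False])) l = bdigit (p (b @ [True])) l"
      "\<forall>i. l \<le> i \<and> i < j \<longrightarrow> cnt p x b i"
      unfolding inprog_def by blast
    have "genopt_inner p x b l m c" unfolding inner_iff using j by blast
    then show ?thesis using genopt_run.draw[OF j(5), of m c] j(6) by auto
  qed
qed

lemma inner_prefix:
  assumes "genopt_inner p x b l l' c" "\<forall>i<l'. x i = y i"
  shows "genopt_inner p y b l l' c"
  using assms
proof (induction rule: genopt_inner.induct)
  case (stop0 l b)
  then show ?case by (auto intro: genopt_inner.stop0)
next
  case (stop1 l b)
  then show ?case by (auto intro: genopt_inner.stop1)
next
  case (cont l b l' c)
  have "Suc l \<le> l'" using inner_imp[OF cont.hyps(3)] by auto
  then show ?case using cont by (auto intro!: genopt_inner.cont)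
qed

lemma run_prefix:
  assumes "genopt_run p x n b l" "\<forall>i<l. x i = y i"
  shows "genopt_run p y n b l"
  using assms
proof (induction rule: genopt_run.induct)
  case init
  show ?case by (rule genopt_run.init)
next
  case (app0 n b l)
  then show ?case by (auto intro: genopt_run.app0)
next
  case (app1 n b l)
  then show ?case by (auto intro: genopt_run.app1)
next
  case (draw n b l l' c)
  have "l < l'" using inner_imp[OF draw.hyps(4)] by auto
  then show ?case using draw inner_prefix[OF draw.hyps(4), of y] by (auto intro!: genopt_run.draw)
qed

lemma inprog_prefix:
  assumes "inprog p x b k" "\<forall>i<k. x i = y i"
  shows "inprog p y b k"
  using assms unfolding inprog_def cnt_def
  apply clarify
  subgoal for l
    apply (rule exI[of _ l])
    using run_prefix[of p x "length b" b l y] by auto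
  done

lemma inprog_0:
  "inprog p x b 0 \<longleftrightarrow> genopt_run p x (length b) b 0 \<and> bdigit (p (b @ [False])) 0 = bdigit (p (b @ [True])) 0"
  unfolding inprog_def by auto

lemma inprog_Suc:
  "inprog p x b (Suc j) \<longleftrightarrow>
    (genopt_run p x (length b) b (Suc j) \<and> bdigit (p (b @ [False])) (Suc j) = bdigit (p (b @ [True])) (Suc j))
    \<or> (inprog p x b j \<and> cnt p x b j)"
  unfolding inprog_def
  apply (rule iffI)
   apply (elim exE conjE)
  subgoal for l by (cases "l = Suc j") (auto intro!: exI[of _ l])
  apply (elim disjE)
   apply (auto intro!: exI[of _ "Suc j"])[1]
  apply (elim exE conjE)
  subgoal for l by (rule exI[of _ l]) (auto simp: less_Suc_eq)
  done

definition dg :: "real \<Rightarrow> nat \<Rightarrow> int" where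
  "dg z k = (if bdigit z k then 1 else 0)"

definition kc :: "real \<Rightarrow> real \<Rightarrow> nat \<Rightarrow> int" where
  "kc a c k = \<lfloor>(a + c) * 2 ^ k\<rfloor> - \<lfloor>a * 2 ^ k\<rfloor> - \<lfloor>c * 2 ^ k\<rfloor>"

lemma dg_01: "dg z k = 0 \<or> dg z k = 1"
  by (simp add: dg_def)

lemma bdigit_dg: "bdigit z k \<longleftrightarrow> dg z k = 1"
  by (simp add: dg_def)

lemma kc_01: "kc a c k = 0 \<or> kc a c k = 1"
proof -
  have e: "(a + c) * 2 ^ k = a * 2 ^ k + c * 2 ^ k" by (simp add: distrib_right)
  show ?thesis unfolding kc_def e floor_add[of "a * 2 ^ k"] by simp
qed

lemma kc_sym: "kc a c k = kc c a k"
  unfolding kc_def by (simp add: add.commute)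

lemma floor_double: "\<lfloor>2 * y\<rfloor> = 2 * \<lfloor>y\<rfloor> \<or> \<lfloor>2 * y\<rfloor> = 2 * \<lfloor>y\<rfloor> + 1"
proof -
  have e: "2 * y = y + y" by simp
  show ?thesis unfolding e floor_add[of y y] by simp
qed

lemma dg_Suc: "dg z (Suc k) = \<lfloor>z * 2 ^ Suc k\<rfloor> - 2 * \<lfloor>z * 2 ^ k\<rfloor>"
proof -
  define y where "y = z * 2 ^ k"
  have e: "z * 2 ^ Suc k = 2 * y" by (simp add: y_def)
  have "\<lfloor>2 * y\<rfloor> = 2 * \<lfloor>y\<rfloor> \<or> \<lfloor>2 * y\<rfloor> = 2 * \<lfloor>y\<rfloor> + 1" by (rule floor_double)
  then show ?thesis unfolding dg_def bdigit_def e y_def[symmetric]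
    by (elim disjE) simp_all
qed

lemma dg_0: assumes "0 \<le> z" "z \<le> 1" shows "dg z 0 = \<lfloor>z\<rfloor>"
proof (cases "z = 1")
  case True then show ?thesis by (simp add: dg_def bdigit_def)
next
  case False
  then have "\<lfloor>z\<rfloor> = 0" using assms by (simp add: floor_eq_iff)
  then show ?thesis by (simp add: dg_def bdigit_def)
qed

lemma id0: assumes "0 \<le> a" "0 \<le> c" "a + c \<le> 1"
  shows "dg (a + c) 0 = dg a 0 + dg c 0 + kc a c 0"
  using assms by (simp add: dg_0 kc_def)

lemma idS: "dg (a + c) (Suc k) + 2 * kc a c k = dg a (Suc k) + dg c (Suc k) + kc a c (Suc k)"
  unfolding dg_Suc kc_def by simp

lemma bcd_facts:
  assumes "binary_coded_distribution p"
  shows "p b = p (b @ [False]) + p (b @ [True])" "0 \<le> p (b @ [False])" "0 \<le> p (b @ [True])"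
    "p (b @ [False]) + p (b @ [True]) \<le> 1"
  using assms unfolding binary_coded_distribution_def by metis+

lemma cnt_bits:
  "cnt p x b j \<Longrightarrow> \<not> x j \<Longrightarrow> \<not> bdigit (p (b @ [False])) (Suc j)"
  "cnt p x b j \<Longrightarrow> x j \<Longrightarrow> \<not> bdigit (p (b @ [True])) (Suc j)"
  unfolding cnt_def by auto

lemma B_lemma:
  assumes bcd: "binary_coded_distribution p"
    and Aex: "\<forall>l. (\<exists>x. genopt_run p x (length b) b l) \<longleftrightarrow> bdigit (p b) l"
    and Aun: "\<forall>l x y. genopt_run p x (length b) b l \<longrightarrow> genopt_run p y (length b) b l \<longrightarrow> (\<forall>i<l. x i = y i)"
  shows "((\<exists>x. inprog p x b j) \<longleftrightarrow> kc (p (b @ [False])) (p (b @ [True])) j = 1) \<and>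
         (\<forall>x y. inprog p x b j \<longrightarrow> inprog p y b j \<longrightarrow> (\<forall>i<j. x i = y i))"
proof (induction j)
  case 0
  define a where "a = p (b @ [False])"
  define c where "c = p (b @ [True])"
  have s: "p b = a + c" and a0: "0 \<le> a" and c0: "0 \<le> c" and ac: "a + c \<le> 1"
    using bcd_facts[OF bcd, of b] unfolding a_def c_def by auto
  have i0: "dg (p b) 0 = dg a 0 + dg c 0 + kc a c 0" unfolding s by (rule id0[OF a0 c0 ac])
  have "(\<exists>x. inprog p x b 0) \<longleftrightarrow> bdigit (p b) 0 \<and> bdigit a 0 = bdigit c 0"
    unfolding inprog_0 a_def c_def using Aex by blast
  also have "\<dots> \<longleftrightarrow> kc a c 0 = 1"
    unfolding bdigit_dg using i0 dg_01[of "p b" 0] dg_01[of a 0] dg_01[of c 0] kc_01[of a c 0]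
    by auto
  finally show ?case unfolding a_def c_def by simp
next
  case (Suc j)
  define a where "a = p (b @ [False])"
  define c where "c = p (b @ [True])"
  have s: "p b = a + c"
    using bcd_facts[OF bcd, of b] unfolding a_def c_def by auto
  have iS: "dg (p b) (Suc j) + 2 * kc a c j = dg a (Suc j) + dg c (Suc j) + kc a c (Suc j)"
    unfolding s by (rule idS)
  note bnds = dg_01[of "p b" "Suc j"] dg_01[of a "Suc j"] dg_01[of c "Suc j"] kc_01[of a c j] kc_01[of a c "Suc j"]
  have IHe: "(\<exists>x. inprog p x b j) \<longleftrightarrow> kc a c j = 1" and IHu: "\<And>x y. inprog p x b j \<Longrightarrow> inprog p y b j \<Longrightarrow> (\<forall>i<j. x i = y i)"
    using Suc.IH unfolding a_def c_def by blast+
  have ex: "(\<exists>x. inprog p x b (Suc j)) \<longleftrightarrow>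
     (bdigit (p b) (Suc j) \<and> bdigit a (Suc j) = bdigit c (Suc j)) \<or> (kc a c j = 1 \<and> \<not> (bdigit a (Suc j) \<and> bdigit c (Suc j)))"
  proof
    assume "\<exists>x. inprog p x b (Suc j)"
    then obtain x where x: "inprog p x b (Suc j)" by blast
    show "(bdigit (p b) (Suc j) \<and> bdigit a (Suc j) = bdigit c (Suc j)) \<or> (kc a c j = 1 \<and> \<not> (bdigit a (Suc j) \<and> bdigit c (Suc j)))"
      using x unfolding inprog_Suc
    proof
      assume "genopt_run p x (length b) b (Suc j) \<and> bdigit (p (b @ [False])) (Suc j) = bdigit (p (b @ [True])) (Suc j)"
      then show ?thesis using Aex unfolding a_def c_def by blast
    next
      assume h: "inprog p x b j \<and> cnt p x b j"
      then have "kc a c j = 1" using IHe by blast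
      moreover have "\<not> (bdigit a (Suc j) \<and> bdigit c (Suc j))"
        using h cnt_bits[of p x b j] unfolding a_def c_def by (cases "x j") auto
      ultimately show ?thesis by blast
    qed
  next
    assume "(bdigit (p b) (Suc j) \<and> bdigit a (Suc j) = bdigit c (Suc j)) \<or> (kc a c j = 1 \<and> \<not> (bdigit a (Suc j) \<and> bdigit c (Suc j)))"
    then show "\<exists>x. inprog p x b (Suc j)"
    proof
      assume h: "bdigit (p b) (Suc j) \<and> bdigit a (Suc j) = bdigit c (Suc j)"
      then obtain x where "genopt_run p x (length b) b (Suc j)" using Aex by blast
      then show ?thesis using h unfolding inprog_Suc a_def c_def by blast
    next
      assume h: "kc a c j = 1 \<and> \<not> (bdigit a (Suc j) \<and> bdigit c (Suc j))"
      then obtain x where x: "inprog p x b j" using IHe by blast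
      define y where "y = x(j := bdigit a (Suc j))"
      have "inprog p y b j" using inprog_prefix[OF x, of y] unfolding y_def by auto
      moreover have "cnt p y b j" using h unfolding cnt_def y_def a_def c_def by auto
      ultimately show ?thesis unfolding inprog_Suc by blast
    qed
  qed
  have "(\<exists>x. inprog p x b (Suc j)) \<longleftrightarrow> kc a c (Suc j) = 1"
    unfolding ex bdigit_dg using iS bnds by auto
  moreover have "\<forall>x y. inprog p x b (Suc j) \<longrightarrow> inprog p y b (Suc j) \<longrightarrow> (\<forall>i<Suc j. x i = y i)"
  proof (rule allI, rule allI, rule impI, rule impI)
    fix x y assume x: "inprog p x b (Suc j)" and y: "inprog p y b (Suc j)"
    have dx: "(genopt_run p x (length b) b (Suc j) \<and> bdigit a (Suc j) = bdigit c (Suc j)) \<or> (inprog p x b j \<and> cnt p x b j)"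
      using x unfolding inprog_Suc a_def c_def by blast
    have dy: "(genopt_run p y (length b) b (Suc j) \<and> bdigit a (Suc j) = bdigit c (Suc j)) \<or> (inprog p y b j \<and> cnt p y b j)"
      using y unfolding inprog_Suc a_def c_def by blast
    have mixed: False if hx: "genopt_run p x' (length b) b (Suc j) \<and> bdigit a (Suc j) = bdigit c (Suc j)"
      and hy: "inprog p y' b j \<and> cnt p y' b j" for x' y'
    proof -
      have "bdigit (p b) (Suc j)" using hx Aex by blast
      moreover have "kc a c j = 1" using hy IHe by blast
      moreover have "\<not> (bdigit a (Suc j) \<and> bdigit c (Suc j))"
        using hy cnt_bits[of p y' b j] unfolding a_def c_def by (cases "y' j") auto
      ultimately show False using hx iS bnds unfolding bdigit_dg by auto
    qed
    show "\<forall>i<Suc j. x i = y i"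
    proof (cases "inprog p x b j \<and> cnt p x b j")
      case False
      then have hx: "genopt_run p x (length b) b (Suc j)" "bdigit a (Suc j) = bdigit c (Suc j)" using dx by auto
      show ?thesis
      proof (cases "inprog p y b j \<and> cnt p y b j")
        case True then show ?thesis using mixed hx by blast
      next
        case False
        then have "genopt_run p y (length b) b (Suc j)" using dy by auto
        then show ?thesis using hx Aun by blast
      qed
    next
      case hx2: True
      show ?thesis
      proof (cases "inprog p y b j \<and> cnt p y b j")
        case False
        then show ?thesis using mixed hx2 dy by blast
      next
        case yy: True
        have agree: "\<forall>i<j. x i = y i" using hx2 yy IHu by blast
        have "x j = y j"
        proof (rule ccontr)
          assume ne: "x j \<noteq> y j"
          have "\<not> bdigit a (Suc j) \<and> \<not> bdigit c (Suc j)"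
            using ne hx2 yy cnt_bits[of p x b j] cnt_bits[of p y b j] unfolding a_def c_def
            by (cases "x j") auto
          moreover have "kc a c j = 1" using hx2 IHe by blast
          ultimately show False using iS bnds unfolding bdigit_dg by auto
        qed
        then show ?thesis using agree less_Suc_eq by auto
      qed
    qed
  qed
  ultimately show ?case unfolding a_def c_def by blast
qed

lemma A_step:
  assumes bcd: "binary_coded_distribution p"
    and Aex: "\<forall>l. (\<exists>x. genopt_run p x (length b) b l) \<longleftrightarrow> bdigit (p b) l"
    and Aun: "\<forall>l x y. genopt_run p x (length b) b l \<longrightarrow> genopt_run p y (length b) b l \<longrightarrow> (\<forall>i<l. x i = y i)"
  shows "(\<forall>m. (\<exists>x. genopt_run p x (length (b @ [c])) (b @ [c]) m) \<longleftrightarrow> bdigit (p (b @ [c])) m) \<and>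
    (\<forall>m x y. genopt_run p x (length (b @ [c])) (b @ [c]) m \<longrightarrow> genopt_run p y (length (b @ [c])) (b @ [c]) m \<longrightarrow> (\<forall>i<m. x i = y i))"
proof -
  define a where "a = p (b @ [c])"
  define a' where "a' = p (b @ [\<not> c])"
  have s: "p b = a + a'" and a0: "0 \<le> a" and a'0: "0 \<le> a'" and aa: "a + a' \<le> 1"
    using bcd_facts[OF bcd, of b] unfolding a_def a'_def by (cases c; auto)+
  have kk: "kc (p (b @ [False])) (p (b @ [True])) j = kc a a' j" for j
    unfolding a_def a'_def by (cases c) (auto simp: kc_sym)
  have Be: "(\<exists>x. inprog p x b j) \<longleftrightarrow> kc a a' j = 1"
    and Bu: "\<And>x y. inprog p x b j \<Longrightarrow> inprog p y b j \<Longrightarrow> (\<forall>i<j. x i = y i)" for j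
    using B_lemma[OF bcd Aex Aun, of j] unfolding kk by blast+
  have R: "genopt_run p x (length (b @ [c])) (b @ [c]) m \<longleftrightarrow>
    (genopt_run p x (length b) b m \<and> bdigit a m \<and> \<not> bdigit a' m) \<or>
    (\<exists>j. m = Suc j \<and> inprog p x b j \<and> x j = c \<and> bdigit a (Suc j))" for x m
    using run_Suc[of p x b c m] unfolding a_def a'_def by simp
  have ex: "(\<exists>x. genopt_run p x (length (b @ [c])) (b @ [c]) m) \<longleftrightarrow>
     (bdigit (p b) m \<and> bdigit a m \<and> \<not> bdigit a' m) \<or> (\<exists>j. m = Suc j \<and> kc a a' j = 1 \<and> bdigit a (Suc j))" for m
  proof
    assume "\<exists>x. genopt_run p x (length (b @ [c])) (b @ [c]) m"
    then obtain x where "genopt_run p x (length (b @ [c])) (b @ [c]) m" by blast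
    then show "(bdigit (p b) m \<and> bdigit a m \<and> \<not> bdigit a' m) \<or> (\<exists>j. m = Suc j \<and> kc a a' j = 1 \<and> bdigit a (Suc j))"
      unfolding R using Aex Be by blast
  next
    assume "(bdigit (p b) m \<and> bdigit a m \<and> \<not> bdigit a' m) \<or> (\<exists>j. m = Suc j \<and> kc a a' j = 1 \<and> bdigit a (Suc j))"
    then show "\<exists>x. genopt_run p x (length (b @ [c])) (b @ [c]) m"
    proof
      assume h: "bdigit (p b) m \<and> bdigit a m \<and> \<not> bdigit a' m"
      then obtain x where "genopt_run p x (length b) b m" using Aex by blast
      then show ?thesis using h unfolding R by blast
    next
      assume "\<exists>j. m = Suc j \<and> kc a a' j = 1 \<and> bdigit a (Suc j)"
      then obtain j where j: "m = Suc j" "kc a a' j = 1" "bdigit a (Suc j)" by blast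
      then obtain x where x: "inprog p x b j" using Be by blast
      define y where "y = x(j := c)"
      have "inprog p y b j" using inprog_prefix[OF x, of y] unfolding y_def by auto
      then have "genopt_run p y (length (b @ [c])) (b @ [c]) m" unfolding R using j by (auto simp: y_def)
      then show ?thesis by blast
    qed
  qed
  have "(\<exists>x. genopt_run p x (length (b @ [c])) (b @ [c]) m) \<longleftrightarrow> bdigit a m" for m
  proof (cases m)
    case 0
    have i0: "dg (p b) 0 = dg a 0 + dg a' 0 + kc a a' 0" unfolding s by (rule id0[OF a0 a'0 aa])
    show ?thesis unfolding ex 0 bdigit_dg using i0 dg_01[of "p b" 0] dg_01[of a 0] dg_01[of a' 0] kc_01[of a a' 0]
      by auto
  next
    case (Suc j)
    have iS: "dg (p b) (Suc j) + 2 * kc a a' j = dg a (Suc j) + dg a' (Suc j) + kc a a' (Suc j)"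
      unfolding s by (rule idS)
    show ?thesis unfolding ex Suc bdigit_dg using iS dg_01[of "p b" "Suc j"] dg_01[of a "Suc j"] dg_01[of a' "Suc j"]
       kc_01[of a a' j] kc_01[of a a' "Suc j"]
      by auto
  qed
  moreover have "\<forall>m x y. genopt_run p x (length (b @ [c])) (b @ [c]) m \<longrightarrow> genopt_run p y (length (b @ [c])) (b @ [c]) m \<longrightarrow> (\<forall>i<m. x i = y i)"
  proof (rule allI, rule allI, rule allI, rule impI, rule impI)
    fix m x y
    assume x: "genopt_run p x (length (b @ [c])) (b @ [c]) m" and y: "genopt_run p y (length (b @ [c])) (b @ [c]) m"
    have mixed: False if hx: "genopt_run p x' (length b) b m \<and> bdigit a m \<and> \<not> bdigit a' m"
      and hy: "m = Suc j \<and> inprog p y' b j \<and> y' j = c \<and> bdigit a (Suc j)" for x' y' j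
    proof -
      have "bdigit (p b) m" using hx Aex by blast
      moreover have "kc a a' j = 1" using hy Be by blast
      moreover have iS: "dg (p b) (Suc j) + 2 * kc a a' j = dg a (Suc j) + dg a' (Suc j) + kc a a' (Suc j)"
        unfolding s by (rule idS)
      ultimately show False using hx hy dg_01[of "p b" "Suc j"] dg_01[of a "Suc j"] dg_01[of a' "Suc j"]
       kc_01[of a a' j] kc_01[of a a' "Suc j"] unfolding bdigit_dg by auto
    qed
    show "\<forall>i<m. x i = y i"
    proof (cases "genopt_run p x (length b) b m \<and> bdigit a m \<and> \<not> bdigit a' m")
      case hx: True
      show ?thesis
      proof (cases "genopt_run p y (length b) b m \<and> bdigit a m \<and> \<not> bdigit a' m")
        case True then show ?thesis using hx Aun by blast
      next
        case False
        then obtain j where "m = Suc j \<and> inprog p y b j \<and> y j = c \<and> bdigit a (Suc j)" using y unfolding R by blast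
        then show ?thesis using mixed hx by blast
      qed
    next
      case False
      then obtain j where hx: "m = Suc j \<and> inprog p x b j \<and> x j = c \<and> bdigit a (Suc j)" using x unfolding R by blast
      show ?thesis
      proof (cases "genopt_run p y (length b) b m \<and> bdigit a m \<and> \<not> bdigit a' m")
        case True then show ?thesis using mixed hx by blast
      next
        case False
        then obtain j' where hy: "m = Suc j' \<and> inprog p y b j' \<and> y j' = c \<and> bdigit a (Suc j')" using y unfolding R by blast
        then have "j' = j" using hx by simp
        then have "\<forall>i<j. x i = y i" using hx hy Bu by blast
        moreover have "x j = y j" using hx hy \<open>j' = j\<close> by simp
        ultimately show ?thesis using hx less_Suc_eq by auto
      qed
    qed
  qed
  ultimately show ?thesis unfolding a_def by blast
qed

lemma main_lemma:
  assumes bcd: "binary_coded_distribution p"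
  shows "(\<forall>l. (\<exists>x. genopt_run p x (length b) b l) \<longleftrightarrow> bdigit (p b) l) \<and>
    (\<forall>l x y. genopt_run p x (length b) b l \<longrightarrow> genopt_run p y (length b) b l \<longrightarrow> (\<forall>i<l. x i = y i))"
proof (induction b rule: rev_induct)
  case Nil
  have p1: "p [] = 1" using bcd unfolding binary_coded_distribution_def by blast
  have "bdigit 1 l \<longleftrightarrow> l = 0" for l
  proof (cases l)
    case 0 then show ?thesis by (simp add: bdigit_def)
  next
    case (Suc k)
    have e: "(1::real) * 2 ^ Suc k = of_int ((2::int) ^ Suc k)" by simp
    have "(2::int) ^ Suc k mod 2 = 0" by simp
    then show ?thesis unfolding bdigit_def Suc e floor_of_int by simp
  qed
  then show ?case using p1 by (auto simp: run_0 intro: genopt_run.init)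
next
  case (snoc c b)
  then show ?case using A_step[OF bcd, of b c] by blast
qed


lemma cyl_measure:
  "measure coins {x \<in> space coins. \<forall>i\<in>{..<l}. x i \<in> {w i}} = (1/2::real) ^ l"
proof -
  interpret product_prob_space "\<lambda>_. measure_pmf (bernoulli_pmf (1/2))" "UNIV :: nat set"
    by (rule product_prob_spaceI) (simp add: prob_space_measure_pmf)
  have "emeasure coins {x \<in> space coins. \<forall>i\<in>{..<l}. x i \<in> {w i}}
     = (\<Prod>i\<in>{..<l}. emeasure (measure_pmf (bernoulli_pmf (1/2))) {w i})"
    unfolding coins_def by (rule emeasure_PiM_Collect) auto
  also have "\<dots> = (\<Prod>i\<in>{..<l}. ennreal (1/2))"
    by (intro prod.cong refl) (simp add: emeasure_pmf_single)
  also have "\<dots> = ennreal ((1/2)^l)" by (simp add: ennreal_power[symmetric] divide_ennreal[symmetric] ennreal_inverse_power[symmetric])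
  finally show ?thesis unfolding coins_def
    by (simp add: measure_def)
qed

theorem theoremC4:
  fixes p :: "bool list \<Rightarrow> real" and n :: nat and s :: "bool list" and l :: nat
  assumes "binary_coded_distribution p"
    and "n \<ge> 1"
    and "length s = n"
  shows "measure coins {x \<in> space coins. genopt_run p x n s l}
           = (1/2) ^ l * (if bdigit (p s) l then 1 else 0)"
proof -
  have M: "(\<exists>x. genopt_run p x n s l) \<longleftrightarrow> bdigit (p s) l"
    "\<And>x y. genopt_run p x n s l \<Longrightarrow> genopt_run p y n s l \<Longrightarrow> (\<forall>i<l. x i = y i)"
    using main_lemma[OF assms(1), of s] assms(3) by blast+
  show ?thesis
  proof (cases "bdigit (p s) l")
    case True
    then obtain x0 where x0: "genopt_run p x0 n s l" using M(1) by blast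
    have "{x \<in> space coins. genopt_run p x n s l} = {x \<in> space coins. \<forall>i\<in>{..<l}. x i \<in> {x0 i}}"
    proof (intro Collect_cong conj_cong refl iffI)
      fix x assume "genopt_run p x n s l"
      then show "\<forall>i\<in>{..<l}. x i \<in> {x0 i}" using M(2)[OF _ x0] by auto
    next
      fix x assume "\<forall>i\<in>{..<l}. x i \<in> {x0 i}"
      then show "genopt_run p x n s l" using run_prefix[OF x0, of x] by auto
    qed
    then show ?thesis using True cyl_measure[of l x0] by simp
  next
    case False
    then have "{x \<in> space coins. genopt_run p x n s l} = {}" using M(1) by blast
    then have "measure coins {x \<in> space coins. genopt_run p x n s l} = 0" by (simp only: measure_empty)
    then show ?thesis using False by simp
  qed
qed

end
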